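(* Let $a<b<c$ be elements of $\mathcal{C}_n$. Every element $\alpha$ of the interior of the triangle $\triangle^{(n)}\{a,b,c\}$ can be written in a unique way as $\alpha=\beta+\gamma$ with $\beta\in\mathcal{STR}^{(n)}\{a,b\}$ and $\gamma\in\mathcal{STR}^{(n)}\{a,c\}$.
   Context: $\mathcal{C}_n=\{0,1,\dots,n-1\}$ with its usual order; $\widehat{\mathcal{E}}_{\mathcal{C}_n}$ is the set of all order-preserving maps $\mathcal{C}_n\to\mathcal{C}_n$ (not required to fix $0$), with addition $(\beta+\gamma)(x)=\max(\beta(x),\gamma(x))$. The triangle $\triangle^{(n)}\{a,b,c\}$ is the set of $\alpha\in\widehat{\mathcal{E}}_{\mathcal{C}_n}$ with image contained in $\{a,b,c\}$; the string $\mathcal{STR}^{(n)}\{x,y\}$ (for $x<y$) is the set of $\alpha\in\widehat{\mathcal{E}}_{\mathcal{C}_n}$ with image contained in $\{x,y\}$. The interior of the triangle is the set of its elements not lying in any of the strings $\mathcal{STR}^{(n)}\{a,b\}$, $\mathcal{STR}^{(n)}\{a,c\}$, $\mathcal{STR}^{(n)}\{b,c\}$, i.e. the $\alpha$ with image exactly $\{a,b,c\}$. *)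

theory Defs
  imports Main
begin

text \<open>Elements of C_n are the naturals 0..n-1. Maps C_n -> C_n are represented as
  functions nat => nat that are extensional: value 0 outside {0..<n}, so that
  equality of maps is equality of HOL functions.\<close>

definition Ehat :: "nat \<Rightarrow> (nat \<Rightarrow> nat) set" where
  "Ehat n = {f. (\<forall>x<n. f x < n) \<and> (\<forall>x y. x \<le> y \<and> y < n \<longrightarrow> f x \<le> f y)
                 \<and> (\<forall>x\<ge>n. f x = 0)}"

definition max_add :: "(nat \<Rightarrow> nat) \<Rightarrow> (nat \<Rightarrow> nat) \<Rightarrow> (nat \<Rightarrow> nat)" where
  "max_add \<beta> \<gamma> = (\<lambda>x. max (\<beta> x) (\<gamma> x))"

definition str_set :: "nat \<Rightarrow> nat \<Rightarrow> nat \<Rightarrow> (nat \<Rightarrow> nat) set" where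
  "str_set n x y = {\<alpha> \<in> Ehat n. \<alpha> ` {0..<n} \<subseteq> {x, y}}"

definition triangle :: "nat \<Rightarrow> nat \<Rightarrow> nat \<Rightarrow> nat \<Rightarrow> (nat \<Rightarrow> nat) set" where
  "triangle n a b c = {\<alpha> \<in> Ehat n. \<alpha> ` {0..<n} \<subseteq> {a, b, c}}"

definition triangle_interior :: "nat \<Rightarrow> nat \<Rightarrow> nat \<Rightarrow> nat \<Rightarrow> (nat \<Rightarrow> nat) set" where
  "triangle_interior n a b c =
     triangle n a b c - (str_set n a b \<union> str_set n a c \<union> str_set n b c)"

end

theory Submission
  imports Defs
begin

lemma helper: "(B::nat) = a \<or> B = b \<Longrightarrow> G = a \<or> G = c \<Longrightarrow> (A = c \<Longrightarrow> B = b) \<Longrightarrow> A = max B G \<Longrightarrow> a < b \<Longrightarrow> b < c \<Longrightarrow>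
 (A = a \<and> B = a \<and> G = a) \<or> (A = b \<and> B = b \<and> G = a) \<or> (A = c \<and> B = b \<and> G = c)"
proof -
  assume h1: "B = a \<or> B = b" and h2: "G = a \<or> G = c" and h3: "A = c \<Longrightarrow> B = b"
    and h4: "A = max B G" and h5: "a < b" and h6: "b < c"
  from h1 show ?thesis
  proof
    assume hb: "B = a"
    from h2 show ?thesis
    proof
      assume "G = a" thus ?thesis using hb h4 by simp
    next
      assume hg: "G = c"
      hence "A = c" using hb h4 h5 h6 by simp
      hence "B = b" by (rule h3)
      thus ?thesis using hb h5 by simp
    qed
  next
    assume hb: "B = b"
    from h2 show ?thesis
    proof
      assume "G = a" thus ?thesis using hb h4 h5 by simp
    next
      assume "G = c" thus ?thesis using hb h4 h6 by simp
    qed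
  qed
qed

theorem proposition21:
  fixes n a b c :: nat and \<alpha> :: "nat \<Rightarrow> nat"
  assumes "a < b" and "b < c" and "c < n"
    and "\<alpha> \<in> triangle_interior n a b c"
  shows "\<exists>!p. fst p \<in> str_set n a b \<and> snd p \<in> str_set n a c \<and> \<alpha> = max_add (fst p) (snd p)"
proof -
  have aE: "\<alpha> \<in> Ehat n" and aim0: "\<alpha> ` {0..<n} \<subseteq> {a,b,c}"
    and nac: "\<not> (\<alpha> ` {0..<n} \<subseteq> {a, c})"
  proof -
    have "\<alpha> \<in> triangle n a b c" "\<alpha> \<notin> str_set n a c"
      using assms(4) unfolding triangle_interior_def by blast+
    thus "\<alpha> \<in> Ehat n" "\<alpha> ` {0..<n} \<subseteq> {a,b,c}" "\<not> (\<alpha> ` {0..<n} \<subseteq> {a, c})"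
      unfolding triangle_def str_set_def by blast+
  qed
  have aim: "\<And>x. x < n \<Longrightarrow> \<alpha> x \<in> {a,b,c}" using aim0 by (auto simp: image_subset_iff)
  have mono: "\<And>x y. x \<le> y \<Longrightarrow> y < n \<Longrightarrow> \<alpha> x \<le> \<alpha> y"
    and out: "\<And>x. x \<ge> n \<Longrightarrow> \<alpha> x = 0" using aE unfolding Ehat_def by auto
  obtain y0 where y00: "y0 < n" "\<alpha> y0 \<notin> {a,c}" using nac by (auto simp: image_subset_iff)
  have y0: "y0 < n" "\<alpha> y0 = b" using y00 aim[of y0] by auto
  define B where "B = (\<lambda>x. if x < n then (if \<alpha> x = a then a else b) else 0)"
  define G where "G = (\<lambda>x. if x < n then (if \<alpha> x = c then c else a) else 0)"
  have BS: "B \<in> str_set n a b"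
  proof -
    have "B x \<le> B y" if "x \<le> y" "y < n" for x y
    proof -
      have "\<alpha> x \<le> \<alpha> y" using mono that by blast
      thus ?thesis using that assms(1,2) aim[of x] aim[of y] by (auto simp: B_def)
    qed
    moreover have "\<forall>x<n. B x < n" using assms(1-3) by (auto simp: B_def)
    ultimately show ?thesis unfolding str_set_def Ehat_def by (auto simp: B_def)
  qed
  have GS: "G \<in> str_set n a c"
  proof -
    have "G x \<le> G y" if "x \<le> y" "y < n" for x y
    proof -
      have "\<alpha> x \<le> \<alpha> y" using mono that by blast
      thus ?thesis using that assms(1,2) aim[of x] aim[of y] by (auto simp: G_def)
    qed
    moreover have "\<forall>x<n. G x < n" using assms(1-3) by (auto simp: G_def)
    ultimately show ?thesis unfolding str_set_def Ehat_def by (auto simp: G_def)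
  qed
  have eq: "\<alpha> = max_add B G"
    unfolding max_add_def B_def G_def using assms(1-3) aim out by (auto simp: fun_eq_iff)
  have uniq: "p = (B, G)" if p: "fst p \<in> str_set n a b" "snd p \<in> str_set n a c"
      "\<alpha> = max_add (fst p) (snd p)" for p
  proof -
    obtain \<beta> \<gamma> where pe: "p = (\<beta>, \<gamma>)" by (cases p)
    have bE: "\<beta> \<in> Ehat n" "\<And>x. x < n \<Longrightarrow> \<beta> x \<in> {a,b}"
      and gE: "\<gamma> \<in> Ehat n" "\<And>x. x < n \<Longrightarrow> \<gamma> x \<in> {a,c}"
      using p(1,2) unfolding pe str_set_def by (auto simp: image_subset_iff)
    have bm: "\<And>x y. x \<le> y \<Longrightarrow> y < n \<Longrightarrow> \<beta> x \<le> \<beta> y"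
      and bo: "\<And>x. x \<ge> n \<Longrightarrow> \<beta> x = 0"
      and go: "\<And>x. x \<ge> n \<Longrightarrow> \<gamma> x = 0"
      using bE(1) gE(1) unfolding Ehat_def by auto
    have ax: "\<And>x. \<alpha> x = max (\<beta> x) (\<gamma> x)" using p(3) unfolding pe max_add_def by simp
    have by0: "\<beta> y0 = b" using ax[of y0] y0 bE(2)[of y0] gE(2)[of y0] assms(1-3) by (auto simp: max_def split: if_splits)
    have "\<beta> x = B x \<and> \<gamma> x = G x" for x
    proof (cases "x < n")
      case False thus ?thesis using bo go by (simp add: B_def G_def)
    next
      case True
      have "\<alpha> x = a \<or> \<alpha> x = b \<or> \<alpha> x = c" using aim[OF True] by auto
      moreover have "\<alpha> x = c \<Longrightarrow> \<beta> x = b"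
      proof -
        assume "\<alpha> x = c"
        hence "y0 < x" using mono[of x y0] y0 assms(2) by (metis not_le le_less_trans less_irrefl)
        hence "b \<le> \<beta> x" using bm[of y0 x] by0 True by simp
        thus ?thesis using bE(2)[OF True] assms(1) by auto
      qed
      moreover have "\<beta> x \<in> {a,b}" "\<gamma> x \<in> {a,c}" using bE(2)[OF True] gE(2)[OF True] by auto
      ultimately have cs: "(\<alpha> x = a \<and> \<beta> x = a \<and> \<gamma> x = a) \<or> (\<alpha> x = b \<and> \<beta> x = b \<and> \<gamma> x = a)
         \<or> (\<alpha> x = c \<and> \<beta> x = b \<and> \<gamma> x = c)"
      proof -
        assume h1: "\<alpha> x = a \<or> \<alpha> x = b \<or> \<alpha> x = c" and h2: "\<alpha> x = c \<Longrightarrow> \<beta> x = b"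
          and h3: "\<beta> x \<in> {a,b}" and h4: "\<gamma> x \<in> {a,c}"
        have m: "\<alpha> x = max (\<beta> x) (\<gamma> x)" by (rule ax)
        from h3 have "\<beta> x = a \<or> \<beta> x = b" by simp
        moreover from h4 have "\<gamma> x = a \<or> \<gamma> x = c" by simp
        ultimately show ?thesis using h2 m assms(1,2) by (rule helper)
      qed
      show ?thesis using cs True assms(1,2) by (simp add: B_def G_def; elim disjE; simp)
    qed
    thus ?thesis using pe by (simp add: fun_eq_iff)
  qed
  show ?thesis
  proof (rule ex1I[of _ "(B, G)"])
    show "fst (B, G) \<in> str_set n a b \<and> snd (B, G) \<in> str_set n a c \<and> \<alpha> = max_add (fst (B, G)) (snd (B, G))"
      using BS GS eq by simp
  next
    fix p assume "fst p \<in> str_set n a b \<and> snd p \<in> str_set n a c \<and> \<alpha> = max_add (fst p) (snd p)"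
    thus "p = (B, G)" using uniq by blast
  qed
qed

end
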